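(* Let $M\in\mathbb{R}^{p\times q}_+$ be a nonnegative matrix whose entries sum to $1$, and let $k\ge1$. The following are equivalent: (i) there exist $A_1,\dots,A_p,B_1,\dots,B_q\in\mathcal{S}^k_+$ with $M_{ij}=\langle A_i,B_j\rangle$ for all $i,j$; (ii) there exist $F_1,\dots,F_p\in\mathcal{S}^k_+$ with $\sum_{i=1}^pF_i=I_k$, $G_1,\dots,G_q\in\mathcal{S}^k_+$ with $\sum_{j=1}^qG_j=I_k$, and $\rho\in\mathcal{S}^{k^2}_+$ with $\operatorname{trace}(\rho)=1$, such that \[ M_{ij}=\operatorname{trace}\big((F_i\otimes G_j)\rho\big)\quad\text{for all } i=1,\dots,p,\ j=1,\dots,q, \] where $\otimes$ denotes the Kronecker product.
   Context: $\mathcal{S}^k_+$ denotes the cone of $k\times k$ real symmetric positive semidefinite matrices, $\langle A,B\rangle=\operatorname{trace}(AB)$, and $I_k$ is the $k\times k$ identity matrix. *)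

theory Defs
  imports "HOL-Analysis.Analysis"
begin

definition psd :: "real^'n^'n \<Rightarrow> bool" where
  "psd A \<longleftrightarrow> transpose A = A \<and> (\<forall>x::real^'n. 0 \<le> x \<bullet> (A *v x))"

definition frob_inner :: "real^'n^'n \<Rightarrow> real^'n^'n \<Rightarrow> real" where
  "frob_inner A B = trace (A ** B)"

text \<open>Kronecker product; rows/columns of the k^2 x k^2 result are indexed by pairs,
  ordered lexicographically: (F \<otimes> G)_{(i,i'),(j,j')} = F_{ij} G_{i'j'}.\<close>
definition kron :: "real^'n^'n \<Rightarrow> real^'m^'m \<Rightarrow> real^('n \<times> 'm)^('n \<times> 'm)" where
  "kron F G = (\<chi> r c. F $ fst r $ fst c * G $ snd r $ snd c)"

end

theory Submission
  imports Defs
begin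


lemma quad_form: "x \<bullet> (A *v x) = (\<Sum>i\<in>UNIV. \<Sum>j\<in>UNIV. x$i * A$i$j * x$j)"
  by (simp add: inner_vec_def matrix_vector_mult_def sum_distrib_left mult.assoc)

lemma psd_sym: "psd A \<Longrightarrow> A$j$i = A$i$j"
proof -
  assume "psd A"
  then have "(transpose A)$j$i = A$j$i" by (simp add: psd_def)
  then show ?thesis by (simp add: transpose_def)
qed

lemma psd_quad: "psd A \<Longrightarrow> 0 \<le> (\<Sum>i\<in>UNIV. \<Sum>j\<in>UNIV. x$i * A$i$j * x$j)"
proof -
  assume "psd A"
  then have "0 \<le> x \<bullet> (A *v x)" by (simp add: psd_def)
  then show ?thesis by (simp only: quad_form)
qed

lemma psdI: assumes "\<And>i j. A$j$i = A$i$j" "\<And>x. 0 \<le> (\<Sum>i\<in>UNIV. \<Sum>j\<in>UNIV. x$i * A$i$j * x$j)"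
  shows "psd A"
  unfolding psd_def quad_form using assms by (auto simp: transpose_def vec_eq_iff)

lemma sum_ifL: "(\<Sum>i\<in>UNIV. (if i = a then s else 0) * f i) = s * (f (a::'a::finite)::real)"
  by (subst sum.cong[OF refl, of _ _ "\<lambda>i. if i = a then s * f a else 0"]) auto
lemma sum_ifR: "(\<Sum>i\<in>UNIV. f i * (if i = a then s else 0)) = (f (a::'a::finite)::real) * s"
  by (subst sum.cong[OF refl, of _ _ "\<lambda>i. if i = a then f a * s else 0"]) auto

lemma quad2: "(\<Sum>i\<in>UNIV. \<Sum>j\<in>UNIV. ((if i = a then s else 0) + (if i = b then t else 0)) * (A::real^'n^'n)$i$j * ((if j = a then s else 0) + (if j = b then t else 0)))
   = s * s * A$a$a + s * t * A$a$b + t * s * A$b$a + t * t * A$b$b"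
  by (simp only: distrib_left distrib_right sum.distrib sum_ifL sum_ifR mult.assoc sum_distrib_left[symmetric]) (simp add: algebra_simps)

lemma psd_quad2: assumes "psd A" shows "0 \<le> s * s * A$a$a + s * t * A$a$b + t * s * A$b$a + t * t * A$b$b"
proof -
  have "0 \<le> (\<Sum>i\<in>UNIV. \<Sum>j\<in>UNIV. (\<chi> i. (if i = a then s else 0) + (if i = b then t else 0))$i * A$i$j * (\<chi> i. (if i = a then s else 0) + (if i = b then t else 0))$j)"
    by (rule psd_quad[OF assms])
  then show ?thesis by (simp only: vec_lambda_beta quad2)
qed

lemma psd_diag_nonneg: assumes "psd A" shows "0 \<le> A$a$a"
  using psd_quad2[OF assms, of 1 a 0 a] by simp

lemma psd_diag_zero: assumes "psd A" "A$a$a = 0" shows "A$a$b = 0" "A$b$a = 0"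
proof -
  have sym: "A$b$a = A$a$b" using psd_sym[OF assms(1)] .
  show "A$a$b = 0"
  proof (rule ccontr)
    assume ne: "A$a$b \<noteq> 0"
    define t where "t = - (A$b$b + 1) / (2 * A$a$b)"
    have "0 \<le> t * t * A$a$a + t * 1 * A$a$b + 1 * t * A$b$a + 1 * 1 * A$b$b" by (rule psd_quad2[OF assms(1)])
    also have "\<dots> = 2*t*A$a$b + A$b$b" using assms(2) sym by simp
    also have "\<dots> = -1" using ne by (simp add: t_def field_simps)
    finally show False by simp
  qed
  then show "A$b$a = 0" using sym by simp
qed


lemma quad_shift: "(\<Sum>i\<in>UNIV. \<Sum>j\<in>UNIV. (x$i + (if i = c then t else 0)) * (A::real^'n^'n)$i$j * (x$j + (if j = c then t else 0)))
  = (\<Sum>i\<in>UNIV. \<Sum>j\<in>UNIV. x$i * A$i$j * x$j) + t * (\<Sum>i\<in>UNIV. x$i * A$i$c) + t * (\<Sum>j\<in>UNIV. A$c$j * x$j) + t * t * A$c$c"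
  by (simp only: distrib_left distrib_right sum.distrib sum_ifL sum_ifR mult.assoc sum_distrib_left[symmetric]) (simp add: algebra_simps sum_distrib_left)

lemma schur_psd:
  fixes A :: "real^'n^'n"
  assumes psd: "psd A" and pos: "A$c$c > 0"
  shows "psd (\<chi> a b. A$a$b - A$a$c * A$b$c / A$c$c)"
proof (rule psdI)
  fix i j show "(\<chi> a b. A$a$b - A$a$c * A$b$c / A$c$c)$j$i = (\<chi> a b. A$a$b - A$a$c * A$b$c / A$c$c)$i$j"
    using psd_sym[OF psd] by (simp add: mult.commute)
next
  fix x :: "real^'n"
  define p where "p = (\<Sum>j\<in>UNIV. A$c$j * x$j)"
  have p2: "(\<Sum>i\<in>UNIV. x$i * A$i$c) = p" unfolding p_def using psd_sym[OF psd]
    by (metis (no_types, lifting) mult.commute sum.cong)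
  define t where "t = - p / A$c$c"
  have "0 \<le> (\<Sum>i\<in>UNIV. \<Sum>j\<in>UNIV. (\<chi> i. x$i + (if i = c then t else 0))$i * A$i$j * (\<chi> i. x$i + (if i = c then t else 0))$j)"
    by (rule psd_quad[OF psd])
  also have "\<dots> = (\<Sum>i\<in>UNIV. \<Sum>j\<in>UNIV. x$i * A$i$j * x$j) + t * p + t * p + t * t * A$c$c"
    by (simp only: vec_lambda_beta quad_shift p2 p_def)
  also have "\<dots> = (\<Sum>i\<in>UNIV. \<Sum>j\<in>UNIV. x$i * A$i$j * x$j) - p * p / A$c$c"
    using pos by (simp add: t_def field_simps)
  also have "\<dots> = (\<Sum>i\<in>UNIV. \<Sum>j\<in>UNIV. x$i * (\<chi> a b. A$a$b - A$a$c * A$b$c / A$c$c)$i$j * x$j)"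
  proof -
    have "(\<Sum>i\<in>UNIV. \<Sum>j\<in>UNIV. x$i * (\<chi> a b. A$a$b - A$a$c * A$b$c / A$c$c)$i$j * x$j)
       = (\<Sum>i\<in>UNIV. \<Sum>j\<in>UNIV. x$i * A$i$j * x$j) - (\<Sum>i\<in>UNIV. \<Sum>j\<in>UNIV. (x$i * A$i$c) * (A$j$c * x$j)) / A$c$c"
      by (simp add: algebra_simps sum_subtractf sum_divide_distrib)
    also have "(\<Sum>i\<in>UNIV. \<Sum>j\<in>UNIV. (x$i * A$i$c) * (A$j$c * x$j)) = p * p"
      using p2 psd_sym[OF psd] by (simp add: sum_product[symmetric] p_def)
    finally show ?thesis by simp
  qed
  finally show "0 \<le> (\<Sum>i\<in>UNIV. \<Sum>j\<in>UNIV. x$i * (\<chi> a b. A$a$b - A$a$c * A$b$c / A$c$c)$i$j * x$j)" .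
qed


lemma ldl_aux:
  fixes S :: "'n::finite set"
  assumes "finite S"
  shows "\<And>A::real^'n^'n. psd A \<Longrightarrow> (\<forall>a b. a \<notin> S \<or> b \<notin> S \<longrightarrow> A$a$b = 0) \<Longrightarrow>
    \<exists>(L::real^'n^'n) d. (\<forall>l. d l = 0 \<or> d l = 1) \<and>
      (\<forall>a. a \<notin> S \<longrightarrow> d a = 0 \<and> (\<forall>b. L$a$b = (if a = b then 1 else 0) \<and> L$b$a = (if a = b then 1 else 0))) \<and>
      (\<forall>x. L *v x = 0 \<longrightarrow> x = 0) \<and>
      A = (\<chi> a b. \<Sum>l\<in>UNIV. d l * L$a$l * L$b$l)"
  using assms
proof (induction S rule: finite_induct)
  case empty
  have "A = 0" using empty.prems(2) by (simp add: vec_eq_iff)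
  then show ?case
    apply (intro exI[of _ "mat 1"] exI[of _ "\<lambda>_. 0"])
    apply (simp only: matrix_vector_mul_lid)
    apply (auto simp: mat_def vec_eq_iff)
    done
next
  case (insert c S')
  note A_supp = insert.prems(2)
  show ?case
  proof (cases "A$c$c = 0")
    case True
    have "\<forall>a b. a \<notin> S' \<or> b \<notin> S' \<longrightarrow> A$a$b = 0"
      using A_supp psd_diag_zero[OF insert.prems(1) True] by (metis insertE)
    from insert.IH[OF insert.prems(1) this] obtain L d where
      "(\<forall>l. d l = 0 \<or> d l = 1)"
      "(\<forall>a. a \<notin> S' \<longrightarrow> d a = 0 \<and> (\<forall>b. L$a$b = (if a = b then 1 else 0) \<and> L$b$a = (if a = b then 1 else 0)))"
      "(\<forall>x. L *v x = 0 \<longrightarrow> x = 0)" "A = (\<chi> a b. \<Sum>l\<in>UNIV. d l * L$a$l * L$b$l)" by blast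
    then show ?thesis by (intro exI[of _ L] exI[of _ d]) auto
  next
    case False
    have sym: "\<And>i j. A$j$i = A$i$j" using psd_sym[OF insert.prems(1)] .
    have pos: "A$c$c > 0" using False psd_diag_nonneg[OF insert.prems(1), of c] by simp
    define s where "s = sqrt (A$c$c)"
    have s_pos: "s > 0" using pos by (simp add: s_def)
    have ss: "s * s = A$c$c" using pos by (simp add: s_def)
    define u where "u = (\<chi> a. A$a$c / s)"
    define A' where "A' = (\<chi> a b. A$a$b - A$a$c * A$b$c / A$c$c)"
    have A'psd: "psd A'" unfolding A'_def by (rule schur_psd[OF insert.prems(1) pos])
    have A'u: "A$a$b = A'$a$b + u$a * u$b" for a b
      unfolding A'_def u_def using s_pos by (simp add: ss[symmetric])
    have "\<forall>a b. a \<notin> S' \<or> b \<notin> S' \<longrightarrow> A'$a$b = 0"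
    proof (intro allI impI)
      fix a b assume ab: "a \<notin> S' \<or> b \<notin> S'"
      consider "a = c" | "b = c" | "a \<notin> insert c S'" | "b \<notin> insert c S'" using ab by blast
      then show "A'$a$b = 0"
      proof cases
        case 1 then show ?thesis unfolding A'_def using pos sym[of b c] by simp
      next
        case 2 then show ?thesis unfolding A'_def using pos by simp
      next
        case 3 then show ?thesis unfolding A'_def using A_supp by auto
      next
        case 4 then show ?thesis unfolding A'_def using A_supp by auto
      qed
    qed
    from insert.IH[OF A'psd this] obtain L d where
      Ld: "(\<forall>l. d l = 0 \<or> d l = 1)"
      "(\<forall>a. a \<notin> S' \<longrightarrow> d a = 0 \<and> (\<forall>b. L$a$b = (if a = b then 1 else 0) \<and> L$b$a = (if a = b then 1 else 0)))"
      "(\<forall>x. L *v x = 0 \<longrightarrow> x = 0)" "A' = (\<chi> a b. \<Sum>l\<in>UNIV. d l * L$a$l * L$b$l)" by blast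
    define L2 where "L2 = (\<chi> a b. if b = c then u$a else L$a$b)"
    define d2 where "d2 = d(c := 1)"
    have dc: "d c = 0" using Ld(2) insert.hyps(2) by auto
    have Lc: "L$c$b = (if c = b then 1 else 0)" for b using Ld(2) insert.hyps(2) by auto
    have uc: "u$c = s" unfolding u_def using ss s_pos by (simp add: field_simps)
    have u0: "a \<notin> insert c S' \<Longrightarrow> u$a = 0" for a unfolding u_def using A_supp by auto
    have "(\<forall>l. d2 l = 0 \<or> d2 l = 1)" using Ld(1) by (simp add: d2_def)
    moreover have "(\<forall>a. a \<notin> insert c S' \<longrightarrow> d2 a = 0 \<and> (\<forall>b. L2$a$b = (if a = b then 1 else 0) \<and> L2$b$a = (if a = b then 1 else 0)))"
      using Ld(2) u0 by (auto simp: d2_def L2_def)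
    moreover have "(\<forall>x. L2 *v x = 0 \<longrightarrow> x = 0)"
    proof (intro allI impI)
      fix x assume x0: "L2 *v x = 0"
      have "(L2 *v x)$c = (\<Sum>b\<in>UNIV. L2$c$b * x$b)" by (simp add: matrix_vector_mult_def)
      also have "\<dots> = (\<Sum>b\<in>UNIV. (if b = c then s * x$c else 0))"
        by (rule sum.cong) (auto simp: L2_def uc Lc)
      also have "\<dots> = s * x$c" by simp
      finally have "x$c = 0" using x0 s_pos by simp
      then have "L *v x = L2 *v x"
        by (auto simp: matrix_vector_mult_def L2_def vec_eq_iff intro!: sum.cong)
      then show "x = 0" using x0 Ld(3) by simp
    qed
    moreover have "A = (\<chi> a b. \<Sum>l\<in>UNIV. d2 l * L2$a$l * L2$b$l)"
    proof -
      have "(\<Sum>l\<in>UNIV. d2 l * L2$a$l * L2$b$l) = (\<Sum>l\<in>UNIV. d l * L$a$l * L$b$l + (if l = c then u$a * u$b else 0))" for a b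
        by (rule sum.cong) (auto simp: d2_def L2_def dc)
      then show ?thesis using A'u Ld(4) by (simp add: vec_eq_iff sum.distrib)
    qed
    ultimately show ?thesis by blast
  qed
qed

lemma ldl:
  fixes A :: "real^'n^'n"
  assumes "psd A"
  shows "\<exists>(L::real^'n^'n) d. (\<forall>l. d l = 0 \<or> d l = 1) \<and> (\<forall>x. L *v x = 0 \<longrightarrow> x = 0) \<and>
      A = (\<chi> a b. \<Sum>l\<in>UNIV. d l * L$a$l * L$b$l)"
proof -
  have supp: "\<forall>a b. a \<notin> (UNIV::'n set) \<or> b \<notin> UNIV \<longrightarrow> A$a$b = 0" by simp
  have fin: "finite (UNIV::'n set)" by simp
  from ldl_aux[OF fin assms supp] obtain L :: "real^'n^'n" and d where
    h: "(\<forall>l. d l = 0 \<or> d l = 1) \<and> (\<forall>a. a \<notin> (UNIV::'n set) \<longrightarrow> d a = 0 \<and> (\<forall>b. L$a$b = (if a = b then 1 else 0) \<and> L$b$a = (if a = b then 1 else 0))) \<and>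
      (\<forall>x. L *v x = 0 \<longrightarrow> x = 0) \<and> A = (\<chi> a b. \<Sum>l\<in>UNIV. d l * L$a$l * L$b$l)"
    by (elim exE)
  show ?thesis
    apply (rule exI[of _ L], rule exI[of _ d])
    using h by (intro conjI) (elim conjE, assumption)+
qed


lemma sum_pair: "(\<Sum>r\<in>(UNIV::('a::finite \<times> 'b::finite) set). f r) = (\<Sum>a\<in>UNIV. \<Sum>b\<in>UNIV. f (a,b))"
  by (simp add: sum.cartesian_product)

lemma psd_gram:
  fixes A :: "real^'n^'n"
  assumes "psd A"
  shows "\<exists>W::real^'n^'n. \<forall>r s. A$r$s = (\<Sum>l\<in>UNIV. W$r$l * W$s$l)"
proof -
  obtain L :: "real^'n^'n" and d where Ld: "(\<forall>l. d l = 0 \<or> d l = 1)" "A = (\<chi> a b. \<Sum>l\<in>UNIV. d l * L$a$l * L$b$l)"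
    using ldl[OF assms] by (elim exE conjE)
  have e: "d l * L$r$l * L$s$l = (d l * L$r$l) * (d l * L$s$l)" for l r s
    using Ld(1)[rule_format, of l] by auto
  have "A$r$s = (\<Sum>l\<in>UNIV. ((\<chi> r l. d l * L$r$l) :: real^'n^'n)$r$l * ((\<chi> r l. d l * L$r$l) :: real^'n^'n)$s$l)" for r s
    unfolding Ld(2) vec_lambda_beta by (rule sum.cong[OF refl e])
  then show ?thesis by (rule exI[where x="(\<chi> r l. d l * L$r$l) :: real^'n^'n", rule_format, OF allI, OF allI]) 
qed



lemma trace_kron: "trace (kron F G ** R) = (\<Sum>a\<in>UNIV. \<Sum>b\<in>UNIV. \<Sum>c\<in>UNIV. \<Sum>e\<in>UNIV. F$a$c * G$b$e * R$(c,e)$(a,b))"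
  by (simp add: trace_def matrix_matrix_mult_def kron_def sum_pair)

lemma in3: "(\<Sum>x\<in>X. \<Sum>y\<in>Y. \<Sum>z\<in>Z. f x y z) = (\<Sum>y\<in>Y. \<Sum>z\<in>Z. \<Sum>x\<in>X. f x y z)"
  by (subst sum.swap) (rule sum.cong[OF refl], rule sum.swap)
lemma in4: "(\<Sum>x\<in>X. \<Sum>y\<in>Y. \<Sum>z\<in>Z. \<Sum>w\<in>U. f x y z w) = (\<Sum>y\<in>Y. \<Sum>z\<in>Z. \<Sum>w\<in>U. \<Sum>x\<in>X. f x y z w)"
  by (subst sum.swap) (rule sum.cong[OF refl], rule in3)
lemma in5: "(\<Sum>x\<in>X. \<Sum>y\<in>Y. \<Sum>z\<in>Z. \<Sum>w\<in>U. \<Sum>v\<in>V. f x y z w v) = (\<Sum>y\<in>Y. \<Sum>z\<in>Z. \<Sum>w\<in>U. \<Sum>v\<in>V. \<Sum>x\<in>X. f x y z w v)"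
  by (subst sum.swap) (rule sum.cong[OF refl], rule in4)

lemma dir2:
  fixes F :: "'p \<Rightarrow> real^'k^'k" and G :: "'q \<Rightarrow> real^'k^'k" and \<rho> :: "real^('k \<times> 'k)^('k \<times> 'k)"
  assumes Fp: "\<forall>i. psd (F i)" and Gp: "\<forall>j. psd (G j)" and rp: "psd \<rho>"
  shows "\<exists>(A :: 'p \<Rightarrow> real^'k^'k) (B :: 'q \<Rightarrow> real^'k^'k).
            (\<forall>i. psd (A i)) \<and> (\<forall>j. psd (B j)) \<and>
            (\<forall>i j. trace (kron (F i) (G j) ** \<rho>) = frob_inner (A i) (B j))"
proof -
  obtain W :: "real^('k\<times>'k)^('k\<times>'k)" where W0: "\<forall>r s. \<rho>$r$s = (\<Sum>l\<in>UNIV. W$r$l * W$s$l)"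
    using psd_gram[OF rp] by (elim exE)
  note W = W0[rule_format]
  define A where "A i = (\<chi> b e. \<Sum>l\<in>UNIV. \<Sum>a\<in>UNIV. \<Sum>c\<in>UNIV. W$(a,b)$l * F i$a$c * W$(c,e)$l)" for i
  have "psd (A i)" for i
  proof (rule psdI)
    fix b e show "A i $ e $ b = A i $ b $ e"
      unfolding A_def vec_lambda_beta
      apply (rule sum.cong[OF refl])
      apply (subst sum.swap)
      apply (rule sum.cong[OF refl])+
      apply (simp add: psd_sym[OF Fp[rule_format, of i], of _ _] mult_ac)
      done
  next
    fix x :: "real^'k"
    define y where "y l = (\<chi> a. \<Sum>b\<in>UNIV. W$(a,b)$l * x$b)" for l
    have "(\<Sum>b\<in>UNIV. \<Sum>e\<in>UNIV. x$b * A i$b$e * x$e) = (\<Sum>l\<in>UNIV. \<Sum>a\<in>UNIV. \<Sum>c\<in>UNIV. y l$a * F i$a$c * y l$c)"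
    proof -
      have "(\<Sum>b\<in>UNIV. \<Sum>e\<in>UNIV. x$b * A i$b$e * x$e) = (\<Sum>b\<in>UNIV. \<Sum>e\<in>UNIV. \<Sum>l\<in>UNIV. \<Sum>a\<in>UNIV. \<Sum>c\<in>UNIV. x$b * (W$(a,b)$l * F i$a$c * W$(c,e)$l) * x$e)"
        unfolding A_def vec_lambda_beta by (simp add: sum_distrib_left sum_distrib_right)
      also have "\<dots> = (\<Sum>l\<in>UNIV. \<Sum>a\<in>UNIV. \<Sum>c\<in>UNIV. \<Sum>b\<in>UNIV. \<Sum>e\<in>UNIV. x$b * (W$(a,b)$l * F i$a$c * W$(c,e)$l) * x$e)"
        by (rule trans[OF in5 in5])
      also have "\<dots> = (\<Sum>l\<in>UNIV. \<Sum>a\<in>UNIV. \<Sum>c\<in>UNIV. y l$a * F i$a$c * y l$c)"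
        unfolding y_def vec_lambda_beta
        by (intro sum.cong[OF refl]) (simp add: sum_distrib_left sum_distrib_right sum_product mult_ac)
      finally show ?thesis .
    qed
    also have "\<dots> \<ge> 0"
      by (intro sum_nonneg psd_quad[OF Fp[rule_format]])
    finally show "0 \<le> (\<Sum>b\<in>UNIV. \<Sum>e\<in>UNIV. x$b * A i$b$e * x$e)" .
  qed
  moreover have "trace (kron (F i) (G j) ** \<rho>) = frob_inner (A i) (G j)" for i j
  proof -
    have Gs: "G j$e$b = G j$b$e" for b e using psd_sym[OF Gp[rule_format, of j]] .
    have "trace (kron (F i) (G j) ** \<rho>) = (\<Sum>a\<in>UNIV. \<Sum>b\<in>UNIV. \<Sum>c\<in>UNIV. \<Sum>e\<in>UNIV. \<Sum>l\<in>UNIV. F i$a$c * G j$b$e * (W$(c,e)$l * W$(a,b)$l))"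
      unfolding trace_kron W by (simp add: sum_distrib_left)
    also have "\<dots> = (\<Sum>b\<in>UNIV. \<Sum>e\<in>UNIV. \<Sum>l\<in>UNIV. \<Sum>a\<in>UNIV. \<Sum>c\<in>UNIV. F i$a$c * G j$b$e * (W$(c,e)$l * W$(a,b)$l))"
      by (subst in5, rule sum.cong[OF refl], subst in4, rule refl)
    also have "\<dots> = (\<Sum>b\<in>UNIV. \<Sum>e\<in>UNIV. A i$b$e * G j$e$b)"
      unfolding A_def vec_lambda_beta
      by (intro sum.cong[OF refl]) (simp add: sum_distrib_right sum_distrib_left mult_ac Gs)
    also have "\<dots> = frob_inner (A i) (G j)"
      by (simp add: frob_inner_def trace_def matrix_matrix_mult_def)
    finally show ?thesis .
  qed
  ultimately show ?thesis
    apply (intro exI[of _ A] exI[of _ G] conjI allI)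
    using Gp by auto
qed



definition diagm :: "('n::finite \<Rightarrow> real) \<Rightarrow> real^'n^'n" where
  "diagm d = (\<chi> a b. if a = b then d a else 0)"

lemma diagm_left: "(diagm d ** X)$a$b = d a * X$a$b"
  unfolding diagm_def matrix_matrix_mult_def
  by (simp add: if_distrib[of "\<lambda>x. x * _"] sum.delta cong: if_cong)

lemma diagm_right: "(X ** diagm d)$a$b = X$a$b * d b"
  unfolding diagm_def matrix_matrix_mult_def
  by (simp add: if_distrib[of "\<lambda>x. _ * x"] sum.delta cong: if_cong)

lemma transpose_diagm: "transpose (diagm d) = diagm d"
  by (simp add: diagm_def transpose_def vec_eq_iff)

lemma ldl_mat: "(\<chi> a b. \<Sum>l\<in>UNIV. d l * L$a$l * L$b$l) = L ** diagm d ** transpose L"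
proof -
  have "(L ** diagm d ** transpose L)$a$b = (\<Sum>l\<in>UNIV. d l * L$a$l * L$b$l)" for a b
    by (simp only: matrix_matrix_mult_def[of "L ** diagm d" "transpose L"] vec_lambda_beta diagm_right)
      (simp add: transpose_def mult_ac)
  then show ?thesis by (simp add: vec_eq_iff)
qed

lemma psd_add: "psd A \<Longrightarrow> psd B \<Longrightarrow> psd (A + B)"
  unfolding psd_def by (simp add: transpose_def vec_eq_iff matrix_vector_mult_add_rdistrib inner_add_right add_nonneg_nonneg)

lemma psd_zero: "psd (0::real^'n^'n)"
  unfolding psd_def by (simp add: transpose_def vec_eq_iff)

lemma psd_sum: "finite S \<Longrightarrow> (\<And>i. i \<in> S \<Longrightarrow> psd (f i)) \<Longrightarrow> psd (sum f S)"
  by (induction S rule: finite_induct) (auto simp: psd_zero psd_add)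

lemma psd_diagm: "(\<And>a. 0 \<le> d a) \<Longrightarrow> psd (diagm d)"
proof (rule psdI)
  fix i j show "diagm d $ j $ i = diagm d $ i $ j" by (simp add: diagm_def)
next
  fix x :: "real^'a" assume "\<And>a. 0 \<le> d a"
  then show "0 \<le> (\<Sum>i\<in>UNIV. \<Sum>j\<in>UNIV. x$i * diagm d$i$j * x$j)"
    unfolding diagm_def by (simp add: if_distrib[of "\<lambda>y. _ * y * _"] sum.delta cong: if_cong)
      (intro sum_nonneg, simp add: mult.commute[of _ "d _"] mult.assoc)
qed

lemma psd_congr:
  fixes A :: "real^'n^'n" and T :: "real^'n^'m"
  assumes "psd A" shows "psd (T ** A ** transpose T)"
  unfolding psd_def
proof (intro conjI allI)
  show "transpose (T ** A ** transpose T) = T ** A ** transpose T"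
    using assms unfolding psd_def by (simp add: matrix_transpose_mul matrix_mul_assoc)
next
  fix x :: "real^'m"
  have "x \<bullet> ((T ** A ** transpose T) *v x) = (transpose T *v x) \<bullet> (A *v (transpose T *v x))"
    by (simp add: matrix_vector_mul_assoc[symmetric] dot_lmul_matrix[symmetric])
  also have "\<dots> \<ge> 0" using assms unfolding psd_def by simp
  finally show "0 \<le> x \<bullet> ((T ** A ** transpose T) *v x)" .
qed

lemma my_add_rdistrib: "((A::real^'n^'m) + B) ** C = A ** C + B ** C"
  by (simp add: matrix_matrix_mult_def vec_eq_iff distrib_right sum.distrib)

lemma mat_sum_left: "finite S \<Longrightarrow> (X::real^'n^'m) ** sum f S = (\<Sum>i\<in>S. X ** f i)"
  by (induction S rule: finite_induct) (auto simp: matrix_add_ldistrib)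

lemma mat_sum_right: "finite S \<Longrightarrow> sum f S ** (X::real^'n^'m) = (\<Sum>i\<in>S. f i ** X)"
  by (induction S rule: finite_induct) (auto simp: my_add_rdistrib)

lemma trace_sum: "finite S \<Longrightarrow> trace (sum f S) = (\<Sum>i\<in>S. trace (f i :: real^'n^'n))"
  by (simp add: trace_def) (rule sum.swap)

lemma kron_vec:
  fixes X :: "real^'k^'k"
  shows "trace (kron F G ** (\<chi> r s. X$(fst r)$(snd r) * X$(fst s)$(snd s))) = trace (transpose X ** F ** X ** transpose G)"
proof -
  have "trace (kron F G ** (\<chi> r s. X$(fst r)$(snd r) * X$(fst s)$(snd s))) =
    (\<Sum>a\<in>UNIV. \<Sum>b\<in>UNIV. \<Sum>c\<in>UNIV. \<Sum>e\<in>UNIV. F$a$c * G$b$e * (X$c$e * X$a$b))"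
    unfolding trace_kron by simp
  also have "\<dots> = (\<Sum>b\<in>UNIV. \<Sum>e\<in>UNIV. \<Sum>c\<in>UNIV. \<Sum>a\<in>UNIV. X$a$b * F$a$c * X$c$e * G$b$e)"
    by (subst in4, rule sum.cong[OF refl], subst sum.swap, rule sum.cong[OF refl], rule sum.cong[OF refl], rule sum.cong[OF refl], simp add: mult_ac)
  also have "\<dots> = trace (transpose X ** F ** X ** transpose G)"
    by (simp add: trace_def matrix_matrix_mult_def transpose_def sum_distrib_left sum_distrib_right mult_ac)
  finally show ?thesis .
qed



lemma side_construct:
  fixes A :: "'p::finite \<Rightarrow> real^'k^'k"
  assumes Ap: "\<forall>i. psd (A i)"
  shows "\<exists>(L::real^'k^'k) d (F::'p \<Rightarrow> real^'k^'k). (\<forall>i. psd (F i)) \<and> sum F UNIV = mat 1 \<and>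
     (\<forall>i. L ** (diagm d ** F i ** diagm d) ** transpose L = A i)"
proof -
  define As where "As = sum A UNIV"
  have Asp: "psd As" unfolding As_def using Ap by (intro psd_sum) auto
  obtain L :: "real^'k^'k" and d where d01: "\<forall>l. d l = 0 \<or> d l = 1" and inj: "\<forall>x. L *v x = 0 \<longrightarrow> x = 0"
    and AsL: "As = (\<chi> a b. \<Sum>l\<in>UNIV. d l * L$a$l * L$b$l)"
    using ldl[OF Asp] by (elim exE conjE)
  have AsL': "As = L ** diagm d ** transpose L" using AsL ldl_mat by simp
  have "\<exists>B::real^'k^'k. B ** L = mat 1" using matrix_left_invertible_ker[of L] inj by simp
  then obtain T :: "real^'k^'k" where TL: "T ** L = mat 1" by (elim exE)
  have LT: "L ** T = mat 1" using TL matrix_left_right_inverse by auto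
  have LTt: "transpose L ** transpose T = mat 1"
    using TL by (simp add: matrix_transpose_mul[symmetric])
  have TLt: "transpose T ** transpose L = mat 1"
    using LT by (simp add: matrix_transpose_mul[symmetric])
  define At where "At i = T ** A i ** transpose T" for i
  have Atp: "psd (At i)" for i unfolding At_def by (rule psd_congr[OF Ap[rule_format]])
  have sumAt: "sum At UNIV = diagm d"
  proof -
    have "sum At UNIV = T ** As ** transpose T"
      unfolding At_def As_def by (simp add: mat_sum_left mat_sum_right)
    also have "\<dots> = (T ** L) ** diagm d ** (transpose L ** transpose T)"
      unfolding AsL' by (simp add: matrix_mul_assoc)
    also have "\<dots> = diagm d" by (simp add: TL LTt)
    finally show ?thesis .
  qed
  have zero: "At i$a$b = 0 \<and> At i$b$a = 0" if "d a = 0" for i a b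
  proof -
    have "(\<Sum>j\<in>UNIV. At j$a$a) = 0"
      using arg_cong[OF sumAt, of "\<lambda>M. M$a$a"] that by (simp add: diagm_def)
    moreover have "\<And>j. j \<in> UNIV \<Longrightarrow> 0 \<le> At j$a$a" by (rule psd_diag_nonneg[OF Atp])
    ultimately have "\<forall>j\<in>UNIV. At j$a$a = 0" using sum_nonneg_eq_0_iff[of UNIV "\<lambda>j. At j$a$a"] by simp
    then have z: "At i$a$a = 0" by simp
    show ?thesis using psd_diag_zero[OF Atp z] by (intro conjI)
  qed
  define c where "c = real CARD('p)"
  have cpos: "c > 0" unfolding c_def by simp
  define F where "F i = At i + diagm (\<lambda>a. (1 - d a) / c)" for i
  have nn: "0 \<le> (1 - d a) / c" for a using d01[rule_format, of a] cpos by auto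
  have "psd (F i)" for i unfolding F_def
    by (intro psd_add Atp psd_diagm nn)
  moreover have "sum F UNIV = mat 1"
  proof -
    have "(sum F UNIV)$a$b = (mat 1 :: real^'k^'k)$a$b" for a b
    proof -
      have "(sum F UNIV)$a$b = (\<Sum>i\<in>UNIV. At i$a$b + (if a = b then (1 - d a) / c else 0))"
        unfolding sum_component by (simp add: F_def diagm_def)
      also have "\<dots> = (\<Sum>i\<in>UNIV. At i$a$b) + c * (if a = b then (1 - d a) / c else 0)"
        by (simp only: sum.distrib sum_constant c_def)
      also have "(\<Sum>i\<in>UNIV. At i$a$b) = (if a = b then d a else 0)"
        using arg_cong[OF sumAt, of "\<lambda>M. M$a$b"] by (simp add: diagm_def)
      finally show ?thesis using cpos by (simp add: mat_def)
    qed
    then show ?thesis by (simp add: vec_eq_iff)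
  qed
  moreover have "L ** (diagm d ** F i ** diagm d) ** transpose L = A i" for i
  proof -
    have "diagm d ** F i ** diagm d = At i"
    proof -
      have "(diagm d ** F i ** diagm d)$a$b = At i$a$b" for a b
      proof -
        have "(diagm d ** F i ** diagm d)$a$b = d a * (At i$a$b + (if a = b then (1 - d a) / c else 0)) * d b"
          by (simp only: diagm_left diagm_right) (simp add: F_def diagm_def)
        also have "\<dots> = At i$a$b"
          using d01[rule_format, of a] d01[rule_format, of b] zero[of a i b] zero[of b i a] by auto
        finally show ?thesis .
      qed
      then show ?thesis by (simp add: vec_eq_iff)
    qed
    then have "L ** (diagm d ** F i ** diagm d) ** transpose L = (L ** T) ** A i ** (transpose T ** transpose L)"
      by (simp add: At_def matrix_mul_assoc)
    then show ?thesis by (simp add: LT TLt)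
  qed
  ultimately show ?thesis
    by (intro exI[of _ L] exI[of _ d] exI[of _ F] conjI allI) auto
qed



lemma tr_eq:
  fixes D1 D2 P F G :: "real^'k^'k"
  assumes "transpose D1 = D1" "transpose D2 = D2"
  shows "trace (transpose (D1 ** P ** D2) ** F ** (D1 ** P ** D2) ** G) = trace (transpose P ** (D1 ** F ** D1) ** P ** (D2 ** G ** D2))"
proof -
  have "transpose (D1 ** P ** D2) ** F ** (D1 ** P ** D2) ** G = D2 ** (transpose P ** D1 ** F ** D1 ** P ** D2 ** G)"
    by (simp add: matrix_transpose_mul matrix_mul_assoc assms)
  then have "trace (transpose (D1 ** P ** D2) ** F ** (D1 ** P ** D2) ** G) = trace ((transpose P ** D1 ** F ** D1 ** P ** D2 ** G) ** D2)"
    by (simp add: trace_mul_sym[of D2])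
  also have "\<dots> = trace (transpose P ** (D1 ** F ** D1) ** P ** (D2 ** G ** D2))"
    by (simp add: matrix_mul_assoc)
  finally show ?thesis .
qed

lemma kron_id: "kron (mat 1 :: real^'n^'n) (mat 1 :: real^'m^'m) = mat 1"
  by (auto simp: kron_def mat_def vec_eq_iff prod_eq_iff)

definition vecm :: "real^'k^'k \<Rightarrow> real^('k::finite \<times> 'k)^('k \<times> 'k)" where
  "vecm X = (\<chi> r s. X$(fst r)$(snd r) * X$(fst s)$(snd s))"

lemma psd_vec: fixes X :: "real^'k::finite^'k" shows "psd (vecm X)"
proof (rule psdI)
  fix i j show "vecm X$j$i = vecm X$i$j"
    by (simp add: vecm_def mult.commute)
next
  fix x :: "real^('k\<times>'k)"
  define v where "v r = X$(fst r)$(snd r)" for r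
  have "(\<Sum>i\<in>UNIV. \<Sum>j\<in>UNIV. x$i * vecm X$i$j * x$j)
     = (\<Sum>i\<in>UNIV. x$i * v i) * (\<Sum>j\<in>UNIV. x$j * v j)"
    by (simp add: sum_product v_def vecm_def mult_ac)
  also have "\<dots> \<ge> 0" by simp
  finally show "0 \<le> (\<Sum>i\<in>UNIV. \<Sum>j\<in>UNIV. x$i * vecm X$i$j * x$j)" .
qed

lemma trace_vec: "trace (vecm X) = trace (transpose X ** mat 1 ** X ** transpose (mat 1))"
  using kron_vec[of "mat 1" "mat 1" X] by (simp add: kron_id vecm_def)

lemma kron_vecm: "trace (kron F G ** vecm X) = trace (transpose X ** F ** X ** transpose G)"
  unfolding vecm_def by (rule kron_vec)



lemma dir1:
  fixes A :: "'p::finite \<Rightarrow> real^'k::finite^'k" and B :: "'q::finite \<Rightarrow> real^'k^'k"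
  assumes Ap: "\<forall>i. psd (A i)" and Bp: "\<forall>j. psd (B j)"
  shows "\<exists>(F :: 'p \<Rightarrow> real^'k^'k) (G :: 'q \<Rightarrow> real^'k^'k) (\<rho> :: real^('k \<times> 'k)^('k \<times> 'k)).
            (\<forall>i. psd (F i)) \<and> (\<Sum>i\<in>UNIV. F i) = mat 1 \<and>
            (\<forall>j. psd (G j)) \<and> (\<Sum>j\<in>UNIV. G j) = mat 1 \<and>
            psd \<rho> \<and> trace \<rho> = (\<Sum>i\<in>UNIV. \<Sum>j\<in>UNIV. frob_inner (A i) (B j)) \<and>
            (\<forall>i j. frob_inner (A i) (B j) = trace (kron (F i) (G j) ** \<rho>))"
proof -
  obtain L1 :: "real^'k^'k" and d1 and F :: "'p \<Rightarrow> real^'k^'k" where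
    Fp: "\<forall>i. psd (F i)" and Fs: "sum F UNIV = mat 1" and FA: "\<forall>i. L1 ** (diagm d1 ** F i ** diagm d1) ** transpose L1 = A i"
    using side_construct[OF Ap] by (elim exE conjE)
  obtain L2 :: "real^'k^'k" and d2 and G :: "'q \<Rightarrow> real^'k^'k" where
    Gp: "\<forall>j. psd (G j)" and Gs: "sum G UNIV = mat 1" and GB: "\<forall>j. L2 ** (diagm d2 ** G j ** diagm d2) ** transpose L2 = B j"
    using side_construct[OF Bp] by (elim exE conjE)
  define P where "P = transpose L1 ** L2"
  define X where "X = diagm d1 ** P ** diagm d2"
  have key: "trace (transpose X ** F i ** X ** G j) = frob_inner (A i) (B j)" for i j
  proof -
    have "trace (transpose X ** F i ** X ** G j) = trace (transpose P ** (diagm d1 ** F i ** diagm d1) ** P ** (diagm d2 ** G j ** diagm d2))"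
      unfolding X_def by (rule tr_eq) (simp_all add: transpose_diagm)
    also have "\<dots> = trace (transpose L2 ** (L1 ** (diagm d1 ** F i ** diagm d1) ** transpose L1) ** L2 ** (diagm d2 ** G j ** diagm d2))"
      unfolding P_def by (simp add: matrix_transpose_mul matrix_mul_assoc)
    also have "\<dots> = trace (transpose L2 ** (A i ** L2 ** (diagm d2 ** G j ** diagm d2)))"
      using FA by (simp add: matrix_mul_assoc)
    also have "\<dots> = trace (A i ** L2 ** (diagm d2 ** G j ** diagm d2) ** transpose L2)"
      by (simp add: trace_mul_sym[of "transpose L2"])
    also have "\<dots> = trace (A i ** B j)"
      using GB by (simp add: matrix_mul_assoc[symmetric])
    finally show ?thesis by (simp add: frob_inner_def)
  qed
  have Gt: "transpose (G j) = G j" for j using Gp psd_def by auto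
  have main: "frob_inner (A i) (B j) = trace (kron (F i) (G j) ** vecm X)" for i j
    using key[of i j] by (simp add: kron_vecm Gt)
  have "trace (vecm X) = trace (transpose X ** sum F UNIV ** X ** sum G UNIV)"
    unfolding trace_vec Fs Gs by simp
  also have "\<dots> = (\<Sum>i\<in>UNIV. \<Sum>j\<in>UNIV. trace (transpose X ** F i ** X ** G j))"
    by (simp add: mat_sum_left mat_sum_right trace_sum) (rule sum.swap)
  also have "\<dots> = (\<Sum>i\<in>UNIV. \<Sum>j\<in>UNIV. frob_inner (A i) (B j))"
    by (simp add: key)
  finally have tr: "trace (vecm X) = (\<Sum>i\<in>UNIV. \<Sum>j\<in>UNIV. frob_inner (A i) (B j))" .
  show ?thesis
    apply (rule exI[of _ F], rule exI[of _ G], rule exI[of _ "vecm X"])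
    using Fp Fs Gp Gs psd_vec tr main by (intro conjI) auto
qed

theorem proposition3p7:
  fixes M :: "real^'q^'p" and k_type :: "'k::finite itself"
  assumes nonneg: "\<forall>i j. 0 \<le> M $ i $ j"
    and sum1: "(\<Sum>i\<in>UNIV. \<Sum>j\<in>UNIV. M $ i $ j) = 1"
  shows "(\<exists>(A :: 'p \<Rightarrow> real^'k^'k) (B :: 'q \<Rightarrow> real^'k^'k).
            (\<forall>i. psd (A i)) \<and> (\<forall>j. psd (B j)) \<and>
            (\<forall>i j. M $ i $ j = frob_inner (A i) (B j)))
     \<longleftrightarrow>
         (\<exists>(F :: 'p \<Rightarrow> real^'k^'k) (G :: 'q \<Rightarrow> real^'k^'k) (\<rho> :: real^('k \<times> 'k)^('k \<times> 'k)).
            (\<forall>i. psd (F i)) \<and> (\<Sum>i\<in>UNIV. F i) = mat 1 \<and>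
            (\<forall>j. psd (G j)) \<and> (\<Sum>j\<in>UNIV. G j) = mat 1 \<and>
            psd \<rho> \<and> trace \<rho> = 1 \<and>
            (\<forall>i j. M $ i $ j = trace (kron (F i) (G j) ** \<rho>)))"
proof
  assume "\<exists>(A :: 'p \<Rightarrow> real^'k^'k) (B :: 'q \<Rightarrow> real^'k^'k).
            (\<forall>i. psd (A i)) \<and> (\<forall>j. psd (B j)) \<and>
            (\<forall>i j. M $ i $ j = frob_inner (A i) (B j))"
  then obtain A :: "'p \<Rightarrow> real^'k^'k" and B :: "'q \<Rightarrow> real^'k^'k" where
    Ap: "\<forall>i. psd (A i)" and Bp: "\<forall>j. psd (B j)" and MAB: "\<forall>i j. M $ i $ j = frob_inner (A i) (B j)"
    by (elim exE conjE)
  obtain F :: "'p \<Rightarrow> real^'k^'k" and G :: "'q \<Rightarrow> real^'k^'k" and \<rho> :: "real^('k \<times> 'k)^('k \<times> 'k)" where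
    h1: "\<forall>i. psd (F i)" and h2: "(\<Sum>i\<in>UNIV. F i) = mat 1" and h3: "\<forall>j. psd (G j)" and h4: "(\<Sum>j\<in>UNIV. G j) = mat 1"
    and h5: "psd \<rho>" and h6: "trace \<rho> = (\<Sum>i\<in>UNIV. \<Sum>j\<in>UNIV. frob_inner (A i) (B j))"
    and h7: "\<forall>i j. frob_inner (A i) (B j) = trace (kron (F i) (G j) ** \<rho>)"
    using dir1[OF Ap Bp] by (elim exE conjE)
  have tr1: "trace \<rho> = 1" using h6 MAB sum1 by simp
  show "\<exists>(F :: 'p \<Rightarrow> real^'k^'k) (G :: 'q \<Rightarrow> real^'k^'k) (\<rho> :: real^('k \<times> 'k)^('k \<times> 'k)).
            (\<forall>i. psd (F i)) \<and> (\<Sum>i\<in>UNIV. F i) = mat 1 \<and>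
            (\<forall>j. psd (G j)) \<and> (\<Sum>j\<in>UNIV. G j) = mat 1 \<and>
            psd \<rho> \<and> trace \<rho> = 1 \<and>
            (\<forall>i j. M $ i $ j = trace (kron (F i) (G j) ** \<rho>))"
    apply (rule exI[of _ F], rule exI[of _ G], rule exI[of _ \<rho>])
    using h1 h2 h3 h4 h5 h7 MAB tr1 by (intro conjI) auto
next
  assume "\<exists>(F :: 'p \<Rightarrow> real^'k^'k) (G :: 'q \<Rightarrow> real^'k^'k) (\<rho> :: real^('k \<times> 'k)^('k \<times> 'k)).
            (\<forall>i. psd (F i)) \<and> (\<Sum>i\<in>UNIV. F i) = mat 1 \<and>
            (\<forall>j. psd (G j)) \<and> (\<Sum>j\<in>UNIV. G j) = mat 1 \<and>
            psd \<rho> \<and> trace \<rho> = 1 \<and>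
            (\<forall>i j. M $ i $ j = trace (kron (F i) (G j) ** \<rho>))"
  then obtain F :: "'p \<Rightarrow> real^'k^'k" and G :: "'q \<Rightarrow> real^'k^'k" and \<rho> :: "real^('k \<times> 'k)^('k \<times> 'k)" where
    Fp: "\<forall>i. psd (F i)" and Gp: "\<forall>j. psd (G j)" and rp: "psd \<rho>" and MF: "\<forall>i j. M $ i $ j = trace (kron (F i) (G j) ** \<rho>)"
    by (elim exE conjE)
  obtain A :: "'p \<Rightarrow> real^'k^'k" and B :: "'q \<Rightarrow> real^'k^'k" where
    Ap: "\<forall>i. psd (A i)" and Bp: "\<forall>j. psd (B j)" and AB: "\<forall>i j. trace (kron (F i) (G j) ** \<rho>) = frob_inner (A i) (B j)"
    using dir2[OF Fp Gp rp] by (elim exE conjE)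
  show "\<exists>(A :: 'p \<Rightarrow> real^'k^'k) (B :: 'q \<Rightarrow> real^'k^'k).
            (\<forall>i. psd (A i)) \<and> (\<forall>j. psd (B j)) \<and>
            (\<forall>i j. M $ i $ j = frob_inner (A i) (B j))"
    apply (rule exI[of _ A], rule exI[of _ B])
    using Ap Bp AB MF by (intro conjI) auto
qed


end
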